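(* Let $\Pi$ be a finite set of proposition symbols, $I=[a]$ with $a$ a positive integer, and $n\in\mathbb N$. Two finite pointed $(\Pi,I)$-models $(M,w)$ and $(N,v)$ satisfy exactly the same full graded multimodal $(\Pi,I)$-type of modal depth $n$ if and only if, for every counting multichannel message passing automaton $A$ for $(\Pi,I)$ and every round $t\le n$, the state of $A$ at $w$ in $M$ in round $t$ equals the state of $A$ at $v$ in $N$ in round $t$.
   Context: $(\Pi,I)$-formulae of graded multimodal logic are generated by $\varphi ::= \top \mid p \mid \neg\varphi \mid (\varphi\land\varphi) \mid \langle\alpha\rangle_{\geq k}\varphi$ ($p\in\Pi$, $\alpha\in I$, $k\in\mathbb N$); $\langle\alpha\rangle_{=k}\varphi$ abbreviates $\langle\alpha\rangle_{\geq k}\varphi\land\neg\langle\alpha\rangle_{\geq k+1}\varphi$. A $(\Pi,I)$-model is $M=(W,(R_\alpha)_{\alpha\in I},V)$ with $W$ nonempty finite, $R_\alpha\subseteq W\times W$, $V\colon\Pi\to\wp(W)$; pointed model $(M,w)$; $\mathcal N^\alpha(w)=\{u:(w,u)\in R_\alpha\}$. Semantics standard, $(M,w)\models\langle\alpha\rangle_{\geq k}\psi$ iff $|\{u\in\mathcal N^\alpha(w):(M,u)\models\psi\}|\geq k$. Full graded multimodal types: $\tau^{(M,w)}_\varepsilon$ is the canonically ordered conjunction of $p$ ($p\in\Pi$, $w\in V(p)$) and $\neg p$ ($p\in\Pi$, $w\notin V(p)$), $\top$ if $\Pi=\emptyset$. For widths $\mathbf k=(\mathbf k_1,\dots,\mathbf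 k_n)$, $\mathbf k_i\in\mathbb N^{|I|}$, $T_{\mathbf k}$ is the set of all types of width $\mathbf k$ of finite pointed models, and for $\mathbf k_0=(k_1,\dots,k_{|I|})$, $\tau^{(M,w)}_{(\mathbf k_0,\mathbf k)}$ is the canonical conjunction of $\tau^{(M,w)}_\varepsilon$, all $\langle\alpha\rangle_{=\ell}\tau$ ($1\le\ell\le k_\alpha-1$, $\tau\in T_{\mathbf k}$) true at $(M,w)$, all $\langle\alpha\rangle_{\geq k_\alpha}\tau$ ($\tau\in T_{\mathbf k}$) true at $(M,w)$, and all $\langle\alpha\rangle_{=|\mathcal N^\alpha(w)|}\top$ with $k_\alpha>|\mathcal N^\alpha(w)|$. The full type of depth $0$ is $\tau^{(M,w)}_0=\tau^{(M,w)}_\varepsilon$; the full type of depth $n+1$ is $\tau^{(M,w)}_{n+1}=\tau^{(M,w)}_{(\mathbf k_1,\dots,\mathbf k_{n+1})}$ for any widths with $k_{i,\alpha}>\max\{|\mathcal N^\alpha(u)|:(w,u)\in(\bigcup_\beta R_\beta)^{i-1}\}$ for all $i\in[n+1]$, $\alpha\in I$. A multiset over $X$ is a function $X\to\mathbb N$; $\mathfrak m(X)$ is the set of multisets over $X$. A counting multichannel message passing automaton for $(\Pi,I)$ is $A=(Q,\pi,\delta,F)$ with $Q$ a nonempty countable set, $\pi\colon\wp(\Pi)\to Q$, $\delta\colon\mathfrak m(Q)^{|I|}\times Q\to Q$, $F\subseteq Q$. Its states on a finite model $M$ are given by $f_0(w)=\pi(\{p\in\Pi:w\in V(p)\})$ and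 $f_{t+1}(w)=\delta(N_1,\dots,N_{|I|},f_t(w))$, where $N_\alpha$ is the multiset of values $f_t(u)$ for $u\in\mathcal N^\alpha(w)$; $f_t(w)$ is the state at $w$ in round $t$. *)

theory Defs
  imports Main "HOL-Library.Countable" "HOL-Library.Multiset"
begin

text \<open>Formulas over proposition symbols of type 'p; channels are natural numbers,
  the index set is I = [a] = {1..a}.  Dia al k phi is the graded diamond
  with grade at least k.\<close>

datatype 'p gform =
    GTop
  | GAtom 'p
  | GNeg "'p gform"
  | GAnd "'p gform" "'p gform"
  | GDia nat nat "'p gform"

instance gform :: (countable) countable
  by countable_datatype

definition GDiaEq :: "nat \<Rightarrow> nat \<Rightarrow> 'p gform \<Rightarrow> 'p gform" where
  "GDiaEq al k phi = GAnd (GDia al k phi) (GNeg (GDia al (Suc k) phi))"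

type_synonym ('p, 'w) kmodel = "'w set \<times> (nat \<Rightarrow> ('w \<times> 'w) set) \<times> ('p \<Rightarrow> 'w set)"

definition Wor :: "('p, 'w) kmodel \<Rightarrow> 'w set" where "Wor M = fst M"
definition Rel :: "('p, 'w) kmodel \<Rightarrow> nat \<Rightarrow> ('w \<times> 'w) set" where "Rel M = fst (snd M)"
definition Val :: "('p, 'w) kmodel \<Rightarrow> 'p \<Rightarrow> 'w set" where "Val M = snd (snd M)"

definition is_model :: "'p set \<Rightarrow> nat \<Rightarrow> ('p, 'w) kmodel \<Rightarrow> bool" where
  "is_model Pi a M \<longleftrightarrow> finite (Wor M) \<and> Wor M \<noteq> {}
     \<and> (\<forall>al\<in>{1..a}. Rel M al \<subseteq> Wor M \<times> Wor M)
     \<and> (\<forall>p\<in>Pi. Val M p \<subseteq> Wor M)"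

definition nbh :: "('p, 'w) kmodel \<Rightarrow> nat \<Rightarrow> 'w \<Rightarrow> 'w set" where
  "nbh M al w = {u. (w, u) \<in> Rel M al}"

fun holds :: "('p, 'w) kmodel \<Rightarrow> 'w \<Rightarrow> 'p gform \<Rightarrow> bool" where
  "holds M w GTop = True"
| "holds M w (GAtom p) = (w \<in> Val M p)"
| "holds M w (GNeg phi) = (\<not> holds M w phi)"
| "holds M w (GAnd phi psi) = (holds M w phi \<and> holds M w psi)"
| "holds M w (GDia al k phi) = (k \<le> card {u \<in> nbh M al w. holds M u phi})"

definition canon :: "'p::countable gform set \<Rightarrow> 'p gform list" where
  "canon S = map from_nat (sorted_list_of_set (to_nat ` S))"

fun conj_list :: "'p gform list \<Rightarrow> 'p gform" where
  "conj_list [] = GTop"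
| "conj_list [x] = x"
| "conj_list (x # xs) = GAnd x (conj_list xs)"

definition canon_conj :: "'p::countable gform set \<Rightarrow> 'p gform" where
  "canon_conj S = conj_list (canon S)"

definition tau_eps :: "'p::countable set \<Rightarrow> ('p, 'w) kmodel \<Rightarrow> 'w \<Rightarrow> 'p gform" where
  "tau_eps Pi M w = canon_conj ({GAtom p | p. p \<in> Pi \<and> w \<in> Val M p}
                             \<union> {GNeg (GAtom p) | p. p \<in> Pi \<and> w \<notin> Val M p})"

text \<open>The type of width (k0, ks), given the set T = T_ks of types of width ks.
  A width vector in N^|I| is a function nat => nat, only its values on {1..a} matter.\<close>

definition build :: "'p::countable set \<Rightarrow> nat \<Rightarrow> (nat \<Rightarrow> nat) \<Rightarrow> 'p gform set
                      \<Rightarrow> ('p, 'w) kmodel \<Rightarrow> 'w \<Rightarrow> 'p gform" where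
  "build Pi a k0 T M w = canon_conj (
       {tau_eps Pi M w}
     \<union> {GDiaEq al l t | al l t. al \<in> {1..a} \<and> 1 \<le> l \<and> l \<le> k0 al - 1 \<and> t \<in> T
                                  \<and> holds M w (GDiaEq al l t)}
     \<union> {GDia al (k0 al) t | al t. al \<in> {1..a} \<and> t \<in> T \<and> holds M w (GDia al (k0 al) t)}
     \<union> {GDiaEq al (card (nbh M al w)) GTop | al. al \<in> {1..a} \<and> k0 al > card (nbh M al w)})"

text \<open>T_ks: the set of all types of width ks of finite pointed models.  Every finite
  model is isomorphic to one whose worlds are natural numbers, so we range over those.\<close>

primrec Ttypes :: "'p::countable set \<Rightarrow> nat \<Rightarrow> (nat \<Rightarrow> nat) list \<Rightarrow> 'p gform set" where
  "Ttypes Pi a [] = {tau_eps Pi M w | (M :: ('p, nat) kmodel) w. is_model Pi a M \<and> w \<in> Wor M}"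
| "Ttypes Pi a (k0 # ks) = {build Pi a k0 (Ttypes Pi a ks) M w | (M :: ('p, nat) kmodel) w.
                              is_model Pi a M \<and> w \<in> Wor M}"

fun tau :: "'p::countable set \<Rightarrow> nat \<Rightarrow> (nat \<Rightarrow> nat) list \<Rightarrow> ('p, 'w) kmodel \<Rightarrow> 'w \<Rightarrow> 'p gform" where
  "tau Pi a [] M w = tau_eps Pi M w"
| "tau Pi a (k0 # ks) M w = build Pi a k0 (Ttypes Pi a ks) M w"

text \<open>Admissible widths for (M, w): k_{i,al} > |N^al(u)| for all u reachable from w in
  exactly i-1 steps of the union of the relations (0-based list index i here).\<close>

definition admissible :: "nat \<Rightarrow> (nat \<Rightarrow> nat) list \<Rightarrow> ('p, 'w) kmodel \<Rightarrow> 'w \<Rightarrow> bool" where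
  "admissible a ks M w \<longleftrightarrow>
     (\<forall>i < length ks. \<forall>u. (w, u) \<in> (\<Union>be\<in>{1..a}. Rel M be) ^^ i \<longrightarrow>
        (\<forall>al\<in>{1..a}. card (nbh M al u) < (ks ! i) al))"

definition same_full_type :: "'p::countable set \<Rightarrow> nat \<Rightarrow> nat \<Rightarrow> ('p, 'w) kmodel \<Rightarrow> 'w
                                 \<Rightarrow> ('p, 'v) kmodel \<Rightarrow> 'v \<Rightarrow> bool" where
  "same_full_type Pi a n M w N v \<longleftrightarrow>
     (\<forall>ks. length ks = n \<and> admissible a ks M w \<and> admissible a ks N v
            \<longrightarrow> tau Pi a ks M w = tau Pi a ks N v)"

text \<open>An automaton (Q, pi, delta, F); the countable state set Q is represented as a
  set of natural numbers.  delta receives the list of the |I| = a multisets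
  (channel al at list position al - 1) and the current state.\<close>

definition is_cmpa :: "'p set \<Rightarrow> nat \<Rightarrow> ('p set \<Rightarrow> nat) \<times> (nat multiset list \<Rightarrow> nat \<Rightarrow> nat) \<Rightarrow> nat set \<Rightarrow> nat set \<Rightarrow> bool" where
  "is_cmpa Pi a pd Q F \<longleftrightarrow> Q \<noteq> {} \<and> F \<subseteq> Q
     \<and> (\<forall>S. S \<subseteq> Pi \<longrightarrow> fst pd S \<in> Q)
     \<and> (\<forall>Ns q. length Ns = a \<and> (\<forall>X\<in>set Ns. set_mset X \<subseteq> Q) \<and> q \<in> Q \<longrightarrow> snd pd Ns q \<in> Q)"

fun run :: "'p set \<Rightarrow> nat \<Rightarrow> ('p set \<Rightarrow> nat) \<Rightarrow> (nat multiset list \<Rightarrow> nat \<Rightarrow> nat)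
              \<Rightarrow> ('p, 'w) kmodel \<Rightarrow> nat \<Rightarrow> 'w \<Rightarrow> nat" where
  "run Pi a pi delta M 0 w = pi {p \<in> Pi. w \<in> Val M p}"
| "run Pi a pi delta M (Suc t) w =
     delta (map (\<lambda>al. image_mset (run Pi a pi delta M t) (mset_set (nbh M al w))) [1..<Suc a])
           (run Pi a pi delta M t w)"

end

theory Submission
  imports Defs
begin

lemma count_img_mset_set:
  "finite A \<Longrightarrow> count (image_mset f (mset_set A)) c = card {a\<in>A. f a = c}"
proof -
  assume fA: "finite A"
  have "count (image_mset f (mset_set A)) c = (\<Sum>y\<in>f -` {c} \<inter> A. 1)"
    using fA by (simp add: count_image_mset)
  also have "\<dots> = card (f -` {c} \<inter> A)" by simp
  also have "f -` {c} \<inter> A = {a\<in>A. f a = c}" by auto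
  finally show ?thesis .
qed

lemma mset_transfer:
  assumes fA: "finite A" and fB: "finite B"
    and eq: "image_mset g1 (mset_set A) = image_mset g2 (mset_set B)"
    and r: "\<And>a b. a\<in>A \<Longrightarrow> b\<in>B \<Longrightarrow> g1 a = g2 b \<Longrightarrow> r1 a = r2 b"
  shows "image_mset r1 (mset_set A) = image_mset r2 (mset_set B)"
proof -
  define h where "h \<tau> = r2 (SOME b. b \<in> B \<and> g2 b = \<tau>)" for \<tau>
  have 1: "r1 a = h (g1 a)" if "a\<in>A" for a
  proof -
    have "g1 a \<in># image_mset g1 (mset_set A)" using that fA by simp
    hence "g1 a \<in># image_mset g2 (mset_set B)" using eq by simp
    then obtain b where b: "b\<in>B" "g2 b = g1 a" using fB by auto
    let ?b = "SOME b. b\<in>B \<and> g2 b = g1 a"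
    have "?b \<in> B \<and> g2 ?b = g1 a" by (rule someI[of _ b]) (simp add: b)
    then show ?thesis unfolding h_def using r[of a ?b] that by simp
  qed
  have 2: "r2 b = h (g2 b)" if "b\<in>B" for b
  proof -
    have "g2 b \<in># image_mset g2 (mset_set B)" using that fB by simp
    hence "g2 b \<in># image_mset g1 (mset_set A)" using eq by simp
    then obtain a where a: "a\<in>A" "g1 a = g2 b" using fA by auto
    let ?b = "SOME b'. b'\<in>B \<and> g2 b' = g2 b"
    have "?b \<in> B \<and> g2 ?b = g2 b" by (rule someI[of _ b]) (simp add: that)
    then show ?thesis unfolding h_def using r[of a ?b] r[of a b] a that by simp
  qed
  have "image_mset r1 (mset_set A) = image_mset (h \<circ> g1) (mset_set A)"
    by (rule image_mset_cong) (use 1 fA in auto)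
  also have "\<dots> = image_mset h (image_mset g1 (mset_set A))" by (simp add: image_mset.compositionality)
  also have "\<dots> = image_mset h (image_mset g2 (mset_set B))" using eq by simp
  also have "\<dots> = image_mset (h \<circ> g2) (mset_set B)" by (simp add: image_mset.compositionality)
  also have "\<dots> = image_mset r2 (mset_set B)"
    by (rule image_mset_cong) (use 2 fB in auto)
  finally show ?thesis .
qed

lemma card_transfer:
  assumes fA: "finite A" and fB: "finite B"
    and eq: "image_mset g1 (mset_set A) = image_mset g2 (mset_set B)"
    and r: "\<And>a b. a\<in>A \<Longrightarrow> b\<in>B \<Longrightarrow> g1 a = g2 b \<Longrightarrow> P a = Q b"
  shows "card {a\<in>A. P a} = card {b\<in>B. Q b}"
proof -
  have "image_mset P (mset_set A) = image_mset Q (mset_set B)"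
    by (rule mset_transfer[OF fA fB eq r])
  hence "count (image_mset P (mset_set A)) True = count (image_mset Q (mset_set B)) True" by simp
  thus ?thesis using fA fB by (simp add: count_img_mset_set)
qed

fun gdepth :: "'p gform \<Rightarrow> nat" where
  "gdepth GTop = 0"
| "gdepth (GAtom p) = 0"
| "gdepth (GNeg f) = gdepth f"
| "gdepth (GAnd f g) = max (gdepth f) (gdepth g)"
| "gdepth (GDia al k f) = Suc (gdepth f)"

fun good :: "'p set \<Rightarrow> nat \<Rightarrow> 'p gform \<Rightarrow> bool" where
  "good Pi a GTop = True"
| "good Pi a (GAtom p) = (p \<in> Pi)"
| "good Pi a (GNeg f) = good Pi a f"
| "good Pi a (GAnd f g) = (good Pi a f \<and> good Pi a g)"
| "good Pi a (GDia al k f) = (al \<in> {1..a} \<and> good Pi a f)"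

lemma holds_conj_list: "holds M x (conj_list xs) \<longleftrightarrow> (\<forall>f\<in>set xs. holds M x f)"
  by (induction xs rule: conj_list.induct) auto
lemma good_conj_list: "\<forall>f\<in>set xs. good Pi a f \<Longrightarrow> good Pi a (conj_list xs)"
  by (induction xs rule: conj_list.induct) auto
lemma depth_conj_list: "\<forall>f\<in>set xs. gdepth f \<le> d \<Longrightarrow> gdepth (conj_list xs) \<le> d"
  by (induction xs rule: conj_list.induct) auto

lemma set_canon: "finite S \<Longrightarrow> set (canon S) = S"
  by (simp add: canon_def image_image)
lemma set_canon_sub: "set (canon S) \<subseteq> S"
proof (cases "finite S")
  case True then show ?thesis by (simp add: set_canon)
next
  case False
  hence "infinite (to_nat ` S)" using finite_imageD inj_to_nat inj_on_subset by blast
  then show ?thesis by (simp add: canon_def)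
qed

lemma holds_canon_conj: "finite S \<Longrightarrow> holds M x (canon_conj S) \<longleftrightarrow> (\<forall>f\<in>S. holds M x f)"
  by (simp add: canon_conj_def holds_conj_list set_canon)
lemma good_canon_conj: "\<forall>f\<in>S. good Pi a f \<Longrightarrow> good Pi a (canon_conj S)"
  unfolding canon_conj_def by (rule good_conj_list) (use set_canon_sub in blast)
lemma depth_canon_conj: "\<forall>f\<in>S. gdepth f \<le> d \<Longrightarrow> gdepth (canon_conj S) \<le> d"
  unfolding canon_conj_def by (rule depth_conj_list) (use set_canon_sub in blast)

definition lits :: "'p set \<Rightarrow> ('p, 'w) kmodel \<Rightarrow> 'w \<Rightarrow> 'p gform set" where
  "lits Pi M w = {GAtom p | p. p \<in> Pi \<and> w \<in> Val M p} \<union> {GNeg (GAtom p) | p. p \<in> Pi \<and> w \<notin> Val M p}"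

lemma tau_eps_lits: "tau_eps Pi M w = canon_conj (lits Pi M w)"
  by (simp add: tau_eps_def lits_def)

lemma finite_lits: "finite Pi \<Longrightarrow> finite (lits Pi M w)"
  unfolding lits_def by auto

lemma holds_tau_eps: "finite Pi \<Longrightarrow> holds M x (tau_eps Pi M x)"
  by (auto simp: tau_eps_lits holds_canon_conj finite_lits lits_def)

lemma good_tau_eps: "good Pi a (tau_eps Pi M x)"
  unfolding tau_eps_lits by (rule good_canon_conj) (auto simp: lits_def)
lemma depth_tau_eps: "gdepth (tau_eps Pi M x) = 0"
proof -
  have "gdepth (tau_eps Pi M x) \<le> 0"
    unfolding tau_eps_lits by (rule depth_canon_conj) (auto simp: lits_def)
  thus ?thesis by simp
qed

lemma tau_eps_props: "finite Pi \<Longrightarrow> holds N y (tau_eps Pi M x) \<Longrightarrow>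
   {p\<in>Pi. y \<in> Val N p} = {p\<in>Pi. x \<in> Val M p}"
proof -
  assume fin: "finite Pi" and h: "holds N y (tau_eps Pi M x)"
  have all: "\<forall>f\<in>lits Pi M x. holds N y f"
    using h by (simp add: tau_eps_lits holds_canon_conj finite_lits fin)
  have "y \<in> Val N p \<longleftrightarrow> x \<in> Val M p" if "p\<in>Pi" for p
  proof (cases "x \<in> Val M p")
    case True
    then have "GAtom p \<in> lits Pi M x" using that by (auto simp: lits_def)
    then show ?thesis using all True by fastforce
  next
    case False
    then have "GNeg (GAtom p) \<in> lits Pi M x" using that by (auto simp: lits_def)
    then show ?thesis using all False by fastforce
  qed
  thus ?thesis by auto
qed

lemma tau_eps_cong: "{p\<in>Pi. x \<in> Val M p} = {p\<in>Pi. y \<in> Val N p} \<Longrightarrow> tau_eps Pi M x = tau_eps Pi N y"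
proof -
  assume h: "{p\<in>Pi. x \<in> Val M p} = {p\<in>Pi. y \<in> Val N p}"
  have "\<And>p. (p \<in> Pi \<and> x \<in> Val M p) = (p \<in> Pi \<and> y \<in> Val N p)"
    using h by (simp add: set_eq_iff)
  hence "lits Pi M x = lits Pi N y" unfolding lits_def by blast
  thus ?thesis by (simp add: tau_eps_lits)
qed

definition bset :: "'p::countable set \<Rightarrow> nat \<Rightarrow> (nat \<Rightarrow> nat) \<Rightarrow> 'p gform set
                      \<Rightarrow> ('p, 'w) kmodel \<Rightarrow> 'w \<Rightarrow> 'p gform set" where
  "bset Pi a k0 T M w = (
       {tau_eps Pi M w}
     \<union> {GDiaEq al l t | al l t. al \<in> {1..a} \<and> 1 \<le> l \<and> l \<le> k0 al - 1 \<and> t \<in> T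
                                  \<and> holds M w (GDiaEq al l t)}
     \<union> {GDia al (k0 al) t | al t. al \<in> {1..a} \<and> t \<in> T \<and> holds M w (GDia al (k0 al) t)}
     \<union> {GDiaEq al (card (nbh M al w)) GTop | al. al \<in> {1..a} \<and> k0 al > card (nbh M al w)})"

lemma build_bset: "build Pi a k0 T M w = canon_conj (bset Pi a k0 T M w)"
  by (simp add: build_def bset_def)

definition bsup :: "nat \<Rightarrow> (nat \<Rightarrow> nat) \<Rightarrow> 'p gform set \<Rightarrow> 'p gform set" where
  "bsup a k0 T = (\<lambda>(al,l,t). GDiaEq al l t) ` (SIGMA al:{1..a}. {..k0 al} \<times> T)
     \<union> (\<lambda>(al,t). GDia al (k0 al) t) ` ({1..a} \<times> T)
     \<union> (\<lambda>(al,l). GDiaEq al l GTop) ` (SIGMA al:{1..a}. {..k0 al})"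

lemma finite_bsup: "finite T \<Longrightarrow> finite (bsup a k0 T)"
  unfolding bsup_def by (intro finite_UnI finite_imageI finite_SigmaI finite_cartesian_product) auto

lemma bset_sub: "bset Pi a k0 T M w \<subseteq> insert (tau_eps Pi M w) (bsup a k0 T)"
proof
  fix f assume "f \<in> bset Pi a k0 T M w"
  then consider "f = tau_eps Pi M w"
    | al l t where "f = GDiaEq al l t" "al \<in> {1..a}" "l \<le> k0 al" "t \<in> T"
    | al t where "f = GDia al (k0 al) t" "al \<in> {1..a}" "t \<in> T"
    | al where "f = GDiaEq al (card (nbh M al w)) GTop" "al \<in> {1..a}" "k0 al > card (nbh M al w)"
    unfolding bset_def by auto
  then show "f \<in> insert (tau_eps Pi M w) (bsup a k0 T)"
  proof cases
    case 1 then show ?thesis by simp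
  next
    case (2 al l t)
    then have "(al,l,t) \<in> (SIGMA al:{1..a}. {..k0 al} \<times> T)" by auto
    then have "GDiaEq al l t \<in> (\<lambda>(al,l,t). GDiaEq al l t) ` (SIGMA al:{1..a}. {..k0 al} \<times> T)"
      by (rule rev_image_eqI) simp
    then show ?thesis unfolding bsup_def using 2 by blast
  next
    case (3 al t)
    then have "(al, t) \<in> {1..a} \<times> T" by auto
    then have "GDia al (k0 al) t \<in> (\<lambda>(al,t). GDia al (k0 al) t) ` ({1..a} \<times> T)"
      by (rule rev_image_eqI) simp
    then show ?thesis unfolding bsup_def using 3 by blast
  next
    case (4 al)
    then have "(al, card (nbh M al w)) \<in> (SIGMA al:{1..a}. {..k0 al})" by auto
    then have "GDiaEq al (card (nbh M al w)) GTop \<in> (\<lambda>(al,l). GDiaEq al l GTop) ` (SIGMA al:{1..a}. {..k0 al})"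
      by (rule rev_image_eqI) simp
    then show ?thesis unfolding bsup_def using 4 by blast
  qed
qed

lemma finite_bset: "finite T \<Longrightarrow> finite (bset Pi a k0 T M w)"
  by (meson bset_sub finite_bsup finite_insert finite_subset)

lemma holds_GDiaEq: "holds M w (GDiaEq al l t) \<longleftrightarrow> card {u \<in> nbh M al w. holds M u t} = l"
  by (auto simp: GDiaEq_def)

lemma holds_build: "finite Pi \<Longrightarrow> finite T \<Longrightarrow> holds M w (build Pi a k0 T M w)"
proof -
  assume fP: "finite Pi" and fT: "finite T"
  have "\<forall>f\<in>bset Pi a k0 T M w. holds M w f"
    unfolding bset_def using fP by (auto simp: holds_tau_eps GDiaEq_def)
  then show ?thesis by (simp add: build_bset holds_canon_conj finite_bset fT)
qed

lemma good_build: "\<forall>t\<in>T. good Pi a t \<Longrightarrow> good Pi a (build Pi a k0 T M w)"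
  unfolding build_bset by (rule good_canon_conj) (auto simp: bset_def good_tau_eps GDiaEq_def)

lemma depth_build: "\<forall>t\<in>T. gdepth t \<le> d \<Longrightarrow> gdepth (build Pi a k0 T M w) \<le> Suc d"
  unfolding build_bset by (rule depth_canon_conj) (auto simp: bset_def depth_tau_eps GDiaEq_def)

lemma build_cong:
  assumes "tau_eps Pi M x = tau_eps Pi N y"
    and "\<forall>al\<in>{1..a}. card (nbh M al x) = card (nbh N al y)"
    and "\<forall>al\<in>{1..a}. \<forall>t\<in>T. \<forall>l. 1 \<le> l \<and> l \<le> k0 al - 1 \<longrightarrow>
            (holds M x (GDiaEq al l t) \<longleftrightarrow> holds N y (GDiaEq al l t))"
    and "\<forall>al\<in>{1..a}. \<forall>t\<in>T. holds M x (GDia al (k0 al) t) \<longleftrightarrow> holds N y (GDia al (k0 al) t)"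
  shows "build Pi a k0 T M x = build Pi a k0 T N y"
proof -
  have e2: "{GDiaEq al l t | al l t. al \<in> {1..a} \<and> 1 \<le> l \<and> l \<le> k0 al - 1 \<and> t \<in> T
                                  \<and> holds M x (GDiaEq al l t)}
         = {GDiaEq al l t | al l t. al \<in> {1..a} \<and> 1 \<le> l \<and> l \<le> k0 al - 1 \<and> t \<in> T
                                  \<and> holds N y (GDiaEq al l t)}"
    using assms(3) by blast
  have e3: "{GDia al (k0 al) t | al t. al \<in> {1..a} \<and> t \<in> T \<and> holds M x (GDia al (k0 al) t)}
      = {GDia al (k0 al) t | al t. al \<in> {1..a} \<and> t \<in> T \<and> holds N y (GDia al (k0 al) t)}"
    using assms(4) by blast
  have e4: "{GDiaEq al (card (nbh M al x)) GTop | al. al \<in> {1..a} \<and> k0 al > card (nbh M al x)}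
     = {GDiaEq al (card (nbh N al y)) GTop | al. al \<in> {1..a} \<and> k0 al > card (nbh N al y)}"
    using assms(2) by (metis (no_types, lifting))
  show ?thesis unfolding build_bset bset_def e2 e3 e4 assms(1) by (rule refl)
qed

lemma finite_Ttypes_Nil: "finite Pi \<Longrightarrow> finite (Ttypes Pi a [])"
proof -
  assume fin: "finite Pi"
  have "Ttypes Pi a [] \<subseteq> (\<lambda>S. canon_conj ({GAtom p|p. p\<in>S} \<union> {GNeg (GAtom p)|p. p\<in>Pi \<and> p\<notin>S})) ` Pow Pi"
  proof
    fix f assume "f \<in> Ttypes Pi a []"
    then obtain M :: "('a, nat) kmodel" and w where f: "f = tau_eps Pi M w" by auto
    let ?S = "{p\<in>Pi. w \<in> Val M p}"
    have "{GAtom p|p. p\<in>?S} = {GAtom p |p. p \<in> Pi \<and> w \<in> Val M p}" by simp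
    moreover have "{GNeg (GAtom p)|p. p\<in>Pi \<and> p\<notin>?S} = {GNeg (GAtom p) | p. p \<in> Pi \<and> w \<notin> Val M p}"
      by blast
    ultimately have "f = canon_conj ({GAtom p|p. p\<in>?S} \<union> {GNeg (GAtom p)|p. p\<in>Pi \<and> p\<notin>?S})"
      unfolding f tau_eps_def by simp
    then show "f \<in> (\<lambda>S. canon_conj ({GAtom p|p. p\<in>S} \<union> {GNeg (GAtom p)|p. p\<in>Pi \<and> p\<notin>S})) ` Pow Pi"
      by blast
  qed
  then show ?thesis using fin finite_subset by blast
qed

lemma finite_Ttypes: "finite Pi \<Longrightarrow> finite (Ttypes Pi a ks)"
proof (induction ks)
  case Nil
  then show ?case by (rule finite_Ttypes_Nil)
next
  case (Cons k0 ks)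
  have "Ttypes Pi a (k0 # ks) \<subseteq> canon_conj ` Pow (Ttypes Pi a [] \<union> bsup a k0 (Ttypes Pi a ks))"
  proof
    fix f assume "f \<in> Ttypes Pi a (k0 # ks)"
    then obtain M :: "('a, nat) kmodel" and w where f: "f = build Pi a k0 (Ttypes Pi a ks) M w"
      and M: "is_model Pi a M" "w \<in> Wor M" by auto
    have "tau_eps Pi M w \<in> Ttypes Pi a []" using M by (simp only: Ttypes.simps) blast
    then have "bset Pi a k0 (Ttypes Pi a ks) M w \<subseteq> Ttypes Pi a [] \<union> bsup a k0 (Ttypes Pi a ks)"
      using bset_sub[of Pi a k0 "Ttypes Pi a ks" M w] by blast
    then show "f \<in> canon_conj ` Pow (Ttypes Pi a [] \<union> bsup a k0 (Ttypes Pi a ks))"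
      unfolding f build_bset by blast
  qed
  moreover have "finite (Ttypes Pi a [] \<union> bsup a k0 (Ttypes Pi a ks))"
    using Cons finite_bsup finite_Ttypes_Nil by blast
  ultimately show ?case using finite_subset by blast
qed

lemma good_Ttypes: "t \<in> Ttypes Pi a ks \<Longrightarrow> good Pi a t \<and> gdepth t \<le> length ks"
proof (induction ks arbitrary: t)
  case Nil
  then show ?case by (auto simp: good_tau_eps depth_tau_eps)
next
  case (Cons k0 ks)
  then obtain M :: "('a, nat) kmodel" and w where t: "t = build Pi a k0 (Ttypes Pi a ks) M w" by auto
  show ?case unfolding t using Cons.IH good_build depth_build by (metis length_Cons)
qed

lemma good_tau: "good Pi a (tau Pi a ks M x) \<and> gdepth (tau Pi a ks M x) \<le> length ks"
proof (cases ks)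
  case Nil then show ?thesis by (simp add: good_tau_eps depth_tau_eps)
next
  case (Cons k0 ks')
  then show ?thesis using good_Ttypes good_build depth_build by (metis length_Cons tau.simps(2))
qed

lemma holds_tau: "finite Pi \<Longrightarrow> holds M x (tau Pi a ks M x)"
  by (cases ks) (auto simp: holds_tau_eps holds_build finite_Ttypes)

lemma nbh_sub: "is_model Pi a M \<Longrightarrow> al \<in> {1..a} \<Longrightarrow> nbh M al x \<subseteq> Wor M"
  unfolding is_model_def nbh_def by blast

lemma finite_nbh: "is_model Pi a M \<Longrightarrow> al \<in> {1..a} \<Longrightarrow> finite (nbh M al x)"
  using nbh_sub is_model_def finite_subset by metis

lemma image_filter: "\<forall>q\<in>A. P (f q) = Q q \<Longrightarrow> {u \<in> f ` A. P u} = f ` {q\<in>A. Q q}"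
  by auto

lemma tau_in_Ttypes:
  fixes M :: "('p::countable, 'w) kmodel"
  assumes M: "is_model Pi a M" and x: "x \<in> Wor M"
  shows "tau Pi a ks M x \<in> Ttypes Pi a ks"
proof -
  let ?W = "Wor M"
  have finW: "finite ?W" using M by (simp add: is_model_def)
  obtain f :: "'w \<Rightarrow> nat" where inj: "inj_on f ?W"
    using finite_imp_inj_to_nat_seg[OF finW] by blast
  define M' :: "('p, nat) kmodel" where
    "M' = (f ` ?W, \<lambda>al. (\<lambda>(p,q). (f p, f q)) ` (Rel M al \<inter> ?W \<times> ?W), \<lambda>p. f ` (Val M p \<inter> ?W))"
  have W': "Wor M' = f ` ?W" by (simp add: M'_def Wor_def)
  have R': "Rel M' al = (\<lambda>(p,q). (f p, f q)) ` (Rel M al \<inter> ?W \<times> ?W)" for al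
    by (simp add: M'_def Rel_def)
  have V': "Val M' p = f ` (Val M p \<inter> ?W)" for p by (simp add: M'_def Val_def)
  have vm: "f y \<in> Val M' p \<longleftrightarrow> y \<in> Val M p" if "y \<in> ?W" for y p
  proof -
    have "f y \<in> f ` (Val M p \<inter> ?W) \<longleftrightarrow> y \<in> Val M p \<inter> ?W"
      by (rule inj_on_image_mem_iff[OF inj that]) blast
    then show ?thesis unfolding V' using that by blast
  qed
  have M'm: "is_model Pi a M'"
    using M unfolding is_model_def W' R' V' by auto
  have nb: "nbh M' al (f y) = f ` nbh M al y" if "y \<in> ?W" "al \<in> {1..a}" for y al
  proof -
    have sub: "nbh M al y \<subseteq> ?W" using nbh_sub[OF M that(2)] .
    show ?thesis
    proof
      show "nbh M' al (f y) \<subseteq> f ` nbh M al y"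
      proof
        fix u assume "u \<in> nbh M' al (f y)"
        then obtain p q where pq: "(p,q) \<in> Rel M al" "p \<in> ?W" "q \<in> ?W" "f p = f y" "u = f q"
          unfolding nbh_def R' by auto
        have "p = y" using inj pq that by (meson inj_on_def)
        then show "u \<in> f ` nbh M al y" using pq by (auto simp: nbh_def)
      qed
    next
      show "f ` nbh M al y \<subseteq> nbh M' al (f y)"
      proof
        fix u assume "u \<in> f ` nbh M al y"
        then obtain q where q: "q \<in> nbh M al y" "u = f q" by auto
        then have "(y,q) \<in> Rel M al \<inter> ?W \<times> ?W" using sub that by (auto simp: nbh_def)
        then show "u \<in> nbh M' al (f y)" unfolding nbh_def R' using q by force
      qed
    qed
  qed
  have cardnb: "card (nbh M' al (f y)) = card (nbh M al y)" if "y \<in> ?W" "al \<in> {1..a}" for y al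
  proof -
    have "inj_on f (nbh M al y)" by (rule inj_on_subset[OF inj nbh_sub[OF M that(2)]])
    thus ?thesis by (simp add: nb[OF that] card_image)
  qed
  have hold: "holds M' (f y) \<phi> = holds M y \<phi>" if "good Pi a \<phi>" "y \<in> ?W" for \<phi> y
    using that
  proof (induction \<phi> arbitrary: y)
    case (GAtom p)
    then show ?case using vm by simp
  next
    case (GDia al k \<psi>)
    have al: "al \<in> {1..a}" and g: "good Pi a \<psi>" using GDia.prems(1) by simp_all
    have sub: "nbh M al y \<subseteq> ?W" using nbh_sub[OF M al] .
    have "{u \<in> nbh M' al (f y). holds M' u \<psi>} = f ` {u \<in> nbh M al y. holds M u \<psi>}"
    proof -
      have "\<forall>q\<in>nbh M al y. holds M' (f q) \<psi> = holds M q \<psi>"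
      proof
        fix q assume "q \<in> nbh M al y"
        then have "q \<in> ?W" using sub by blast
        then show "holds M' (f q) \<psi> = holds M q \<psi>" by (rule GDia.IH[OF g])
      qed
      then show ?thesis unfolding nb[OF GDia.prems(2) al] by (rule image_filter)
    qed
    moreover have "inj_on f {u \<in> nbh M al y. holds M u \<psi>}"
      by (rule inj_on_subset[OF inj]) (use sub in blast)
    ultimately have "card {u \<in> nbh M' al (f y). holds M' u \<psi>} = card {u \<in> nbh M al y. holds M u \<psi>}"
      by (simp add: card_image)
    then show ?case by simp
  qed simp_all
  have props: "{p\<in>Pi. f x \<in> Val M' p} = {p\<in>Pi. x \<in> Val M p}"
    using vm[OF x] by blast
  have "tau Pi a ks M' (f x) = tau Pi a ks M x"
  proof (cases ks)
    case Nil
    then show ?thesis using tau_eps_cong[OF props] by simp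
  next
    case (Cons k0 ks')
    have gT: "\<forall>t\<in>Ttypes Pi a ks'. good Pi a t" using good_Ttypes by blast
    have "build Pi a k0 (Ttypes Pi a ks') M' (f x) = build Pi a k0 (Ttypes Pi a ks') M x"
    proof (rule build_cong)
      show "tau_eps Pi M' (f x) = tau_eps Pi M x" using tau_eps_cong[OF props] .
      show "\<forall>al\<in>{1..a}. card (nbh M' al (f x)) = card (nbh M al x)" using cardnb x by blast
      show "\<forall>al\<in>{1..a}. \<forall>t\<in>Ttypes Pi a ks'. \<forall>l. 1 \<le> l \<and> l \<le> k0 al - 1 \<longrightarrow>
            (holds M' (f x) (GDiaEq al l t) \<longleftrightarrow> holds M x (GDiaEq al l t))"
      proof (intro ballI allI impI)
        fix al t l assume "al \<in> {1..a}" "t \<in> Ttypes Pi a ks'"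
        then have "good Pi a (GDiaEq al l t)" using gT by (simp add: GDiaEq_def)
        then show "holds M' (f x) (GDiaEq al l t) \<longleftrightarrow> holds M x (GDiaEq al l t)" by (rule hold[OF _ x])
      qed
      show "\<forall>al\<in>{1..a}. \<forall>t\<in>Ttypes Pi a ks'.
            holds M' (f x) (GDia al (k0 al) t) \<longleftrightarrow> holds M x (GDia al (k0 al) t)"
      proof (intro ballI)
        fix al t assume "al \<in> {1..a}" "t \<in> Ttypes Pi a ks'"
        then have "good Pi a (GDia al (k0 al) t)" using gT by simp
        then show "holds M' (f x) (GDia al (k0 al) t) \<longleftrightarrow> holds M x (GDia al (k0 al) t)" by (rule hold[OF _ x])
      qed
    qed
    then show ?thesis using Cons by simp
  qed
  moreover have "tau Pi a ks M' (f x) \<in> Ttypes Pi a ks"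
  proof (cases ks)
    case Nil
    then show ?thesis using M'm x W' by (simp only: Ttypes.simps tau.simps) blast
  next
    case (Cons k0 ks')
    then show ?thesis using M'm x W' by (simp only: Ttypes.simps tau.simps) blast
  qed
  ultimately show ?thesis by simp
qed

definition wide :: "nat \<Rightarrow> (nat \<Rightarrow> nat) list \<Rightarrow> ('p, 'w) kmodel \<Rightarrow> bool" where
  "wide a ks N \<longleftrightarrow> (\<forall>k\<in>set ks. \<forall>al\<in>{1..a}. \<forall>x\<in>Wor N. card (nbh N al x) < k al)"

lemma sum_fibers_le:
  assumes fA: "finite A" and fU: "finite U"
  shows "(\<Sum>t\<in>U. card {u\<in>A. g u = t}) \<le> card A"
proof -
  have "(\<Sum>t\<in>U. card {u\<in>A. g u = t}) = card (\<Union>t\<in>U. {u\<in>A. g u = t})"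
    by (rule card_UN_disjoint[symmetric]) (use fU fA in auto)
  also have "\<dots> \<le> card A" by (rule card_mono[OF fA]) blast
  finally show ?thesis .
qed

lemma type_char:
  fixes N :: "('p::countable, 'v) kmodel"
  assumes fP: "finite Pi" and N: "is_model Pi a N"
  shows "wide a ks N \<Longrightarrow> y \<in> Wor N \<Longrightarrow> \<tau> \<in> Ttypes Pi a ks \<Longrightarrow> holds N y \<tau>
          \<Longrightarrow> tau Pi a ks N y = \<tau>"
proof (induction ks arbitrary: y \<tau>)
  case Nil
  obtain M' :: "('p, nat) kmodel" and x' where \<tau>: "\<tau> = tau_eps Pi M' x'"
    using Nil.prems(3) by (simp only: Ttypes.simps mem_Collect_eq) blast
  have h: "holds N y (tau_eps Pi M' x')" using Nil.prems(4) \<tau> by simp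
  have "{p\<in>Pi. y \<in> Val N p} = {p\<in>Pi. x' \<in> Val M' p}"
    by (rule tau_eps_props[OF fP h])
  then have "tau_eps Pi N y = tau_eps Pi M' x'" by (rule tau_eps_cong)
  then show ?case using \<tau> by simp
next
  case (Cons k0 ks)
  let ?T = "Ttypes Pi a ks"
  obtain M' :: "('p, nat) kmodel" and x' where M': "is_model Pi a M'" "x' \<in> Wor M'"
    and \<tau>: "\<tau> = build Pi a k0 ?T M' x'"
    using Cons.prems(3) by (simp only: Ttypes.simps mem_Collect_eq) blast
  have wks: "wide a ks N" using Cons.prems(1) by (simp add: wide_def)
  have wk: "\<forall>al\<in>{1..a}. \<forall>z\<in>Wor N. card (nbh N al z) < k0 al"
    using Cons.prems(1) by (simp add: wide_def)
  have fT: "finite ?T" using finite_Ttypes[OF fP] .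
  have hS: "\<forall>\<phi>\<in>bset Pi a k0 ?T M' x'. holds N y \<phi>"
    using Cons.prems(4) unfolding \<tau> build_bset by (simp add: holds_canon_conj finite_bset fT)
  have IHc: "holds N z t \<longleftrightarrow> tau Pi a ks N z = t" if "t \<in> ?T" "z \<in> Wor N" for t z
  proof
    assume "holds N z t"
    then show "tau Pi a ks N z = t" by (rule Cons.IH[OF wks that(2) that(1)])
  next
    assume "tau Pi a ks N z = t"
    then show "holds N z t" using holds_tau[OF fP, of N z a ks] by simp
  qed
  have y: "y \<in> Wor N" by (rule Cons.prems(2))
  have peral: "card (nbh M' al x') = card (nbh N al y)
     \<and> (\<forall>t\<in>?T. card {u \<in> nbh M' al x'. holds M' u t} < k0 al)
     \<and> (\<forall>t\<in>?T. \<forall>l. 1 \<le> l \<longrightarrow>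
          (card {u \<in> nbh M' al x'. holds M' u t} = l \<longleftrightarrow> card {u \<in> nbh N al y. holds N u t} = l))"
    if al: "al \<in> {1..a}" for al
  proof -
    let ?A' = "nbh M' al x'" and ?A = "nbh N al y"
    define cM where "cM t = card {u \<in> ?A'. holds M' u t}" for t
    define cN where "cN t = card {u \<in> ?A. holds N u t}" for t
    have fA: "finite ?A" using finite_nbh[OF N al] .
    have fA': "finite ?A'" using finite_nbh[OF M' (1) al] .
    have kA: "card ?A < k0 al" using wk al y by blast
    have cNle: "cN t \<le> card ?A" for t unfolding cN_def by (rule card_mono[OF fA]) blast
    have c1: "cM t < k0 al" if t: "t \<in> ?T" for t
    proof (rule ccontr)
      assume "\<not> cM t < k0 al"
      then have "holds M' x' (GDia al (k0 al) t)" by (simp add: cM_def)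
      then have "GDia al (k0 al) t \<in> bset Pi a k0 ?T M' x'" using al t unfolding bset_def by blast
      then have "holds N y (GDia al (k0 al) t)" using hS by blast
      then have "k0 al \<le> cN t" by (simp add: cN_def)
      then show False using cNle[of t] kA by linarith
    qed
    have c2: "cN t = cM t" if t: "t \<in> ?T" and p: "1 \<le> cM t" for t
    proof -
      have "holds M' x' (GDiaEq al (cM t) t)" by (simp add: holds_GDiaEq cM_def)
      moreover have "cM t \<le> k0 al - 1" using c1[OF t] by linarith
      ultimately have "GDiaEq al (cM t) t \<in> bset Pi a k0 ?T M' x'"
        using al t p unfolding bset_def by blast
      then have "holds N y (GDiaEq al (cM t) t)" using hS by blast
      then show ?thesis by (simp add: holds_GDiaEq cN_def)
    qed
    have c5: "(\<Sum>t\<in>U. cN t) \<le> card ?A" if U: "finite U" "U \<subseteq> ?T" for U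
    proof -
      have "(\<Sum>t\<in>U. cN t) = (\<Sum>t\<in>U. card {u\<in>?A. tau Pi a ks N u = t})"
      proof (rule sum.cong[OF refl])
        fix t assume "t \<in> U"
        then have t: "t \<in> ?T" using U by blast
        have "{u\<in>?A. holds N u t} = {u\<in>?A. tau Pi a ks N u = t}"
          using IHc[OF t] nbh_sub[OF N al] by blast
        then show "cN t = card {u\<in>?A. tau Pi a ks N u = t}" by (simp add: cN_def)
      qed
      also have "\<dots> \<le> card ?A" by (rule sum_fibers_le[OF fA U(1)])
      finally show ?thesis .
    qed
    define Tx where "Tx = {t\<in>?T. 1 \<le> cM t}"
    have fTx: "finite Tx" using fT by (simp add: Tx_def)
    have TxT: "Tx \<subseteq> ?T" by (auto simp: Tx_def)
    have c4: "card ?A' \<le> (\<Sum>t\<in>Tx. cM t)"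
    proof -
      have "?A' \<subseteq> (\<Union>t\<in>Tx. {u\<in>?A'. holds M' u t})"
      proof
        fix u assume u: "u \<in> ?A'"
        then have uW: "u \<in> Wor M'" using nbh_sub[OF M'(1) al] by blast
        let ?t = "tau Pi a ks M' u"
        have tT: "?t \<in> ?T" by (rule tau_in_Ttypes[OF M'(1) uW])
        have hu: "holds M' u ?t" by (rule holds_tau[OF fP])
        then have "u \<in> {v\<in>?A'. holds M' v ?t}" using u by blast
        moreover have "finite {v\<in>?A'. holds M' v ?t}" using fA' by simp
        ultimately have "1 \<le> cM ?t" unfolding cM_def
          by (metis One_nat_def Suc_leI card_gt_0_iff empty_iff)
        then have "?t \<in> Tx" using tT by (simp add: Tx_def)
        then show "u \<in> (\<Union>t\<in>Tx. {u\<in>?A'. holds M' u t})" using hu u by blast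
      qed
      moreover have "finite (\<Union>t\<in>Tx. {u\<in>?A'. holds M' u t})"
        by (rule finite_subset[OF _ fA']) blast
      ultimately have "card ?A' \<le> card (\<Union>t\<in>Tx. {u\<in>?A'. holds M' u t})"
        using card_mono by blast
      also have "\<dots> \<le> (\<Sum>t\<in>Tx. card {u\<in>?A'. holds M' u t})" by (rule card_UN_le[OF fTx])
      finally show ?thesis by (simp add: cM_def)
    qed
    have sEq: "(\<Sum>t\<in>Tx. cM t) = (\<Sum>t\<in>Tx. cN t)"
      by (rule sum.cong[OF refl]) (use c2 in \<open>auto simp: Tx_def\<close>)
    have sle: "(\<Sum>t\<in>Tx. cN t) \<le> card ?A" by (rule c5[OF fTx TxT])
    have cA'k: "card ?A' < k0 al" using c4 sEq sle kA by linarith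
    have cardeq: "card ?A' = card ?A"
    proof -
      have "GDiaEq al (card ?A') GTop \<in> bset Pi a k0 ?T M' x'"
        using al cA'k unfolding bset_def by blast
      then have "holds N y (GDiaEq al (card ?A') GTop)" using hS by blast
      then show ?thesis by (simp add: holds_GDiaEq)
    qed
    have c6: "cM t = l" if t: "t \<in> ?T" and l: "1 \<le> l" "cN t = l" for t l
    proof (cases "1 \<le> cM t")
      case True then show ?thesis using c2[OF t] l by simp
    next
      case False
      then have tn: "t \<notin> Tx" by (simp add: Tx_def)
      have "(\<Sum>t'\<in>insert t Tx. cN t') \<le> card ?A" by (rule c5) (use fTx TxT t in auto)
      then have "cN t + (\<Sum>t\<in>Tx. cN t) \<le> card ?A" using tn fTx by simp
      then show ?thesis using l c4 sEq cardeq by linarith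
    qed
    show ?thesis
    proof (intro conjI ballI allI impI)
      show "card ?A' = card ?A" by (rule cardeq)
    next
      fix t assume "t \<in> ?T" then show "card {u \<in> ?A'. holds M' u t} < k0 al"
        using c1 by (simp add: cM_def)
    next
      fix t and l :: nat assume t: "t \<in> ?T" and l: "1 \<le> l"
      show "(card {u \<in> ?A'. holds M' u t} = l) = (card {u \<in> ?A. holds N u t} = l)"
        using c2[OF t] c6[OF t l] l unfolding cM_def cN_def by auto
    qed
  qed
  have "build Pi a k0 ?T M' x' = build Pi a k0 ?T N y"
  proof (rule build_cong)
    have "tau_eps Pi M' x' \<in> bset Pi a k0 ?T M' x'" by (simp add: bset_def)
    then have "holds N y (tau_eps Pi M' x')" using hS by blast
    then have "{p\<in>Pi. y \<in> Val N p} = {p\<in>Pi. x' \<in> Val M' p}" by (rule tau_eps_props[OF fP])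
    then show "tau_eps Pi M' x' = tau_eps Pi N y" by (intro tau_eps_cong) simp
    show "\<forall>al\<in>{1..a}. card (nbh M' al x') = card (nbh N al y)" using peral by blast
    show "\<forall>al\<in>{1..a}. \<forall>t\<in>?T. \<forall>l. 1 \<le> l \<and> l \<le> k0 al - 1 \<longrightarrow>
            (holds M' x' (GDiaEq al l t) \<longleftrightarrow> holds N y (GDiaEq al l t))"
      using peral by (simp add: holds_GDiaEq)
    show "\<forall>al\<in>{1..a}. \<forall>t\<in>?T. holds M' x' (GDia al (k0 al) t) \<longleftrightarrow> holds N y (GDia al (k0 al) t)"
    proof (intro ballI)
      fix al t assume al: "al \<in> {1..a}" and t: "t \<in> ?T"
      have "card {u \<in> nbh N al y. holds N u t} \<le> card (nbh N al y)"
        by (rule card_mono[OF finite_nbh[OF N al]]) blast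
      then have "card {u \<in> nbh N al y. holds N u t} < k0 al" using wk al y by fastforce
      then show "holds M' x' (GDia al (k0 al) t) \<longleftrightarrow> holds N y (GDia al (k0 al) t)"
        using peral[OF al] t by auto
    qed
  qed
  then show ?case using \<tau> by simp
qed

lemma bset_memI:
  "al \<in> {1..a} \<Longrightarrow> 1 \<le> c \<Longrightarrow> c < k0 al \<Longrightarrow> t \<in> T \<Longrightarrow> card {u \<in> nbh M al x. holds M u t} = c
   \<Longrightarrow> GDiaEq al c t \<in> bset Pi a k0 T M x"
proof -
  assume h: "al \<in> {1..a}" "1 \<le> c" "c < k0 al" "t \<in> T" "card {u \<in> nbh M al x. holds M u t} = c"
  then have "holds M x (GDiaEq al c t)" "c \<le> k0 al - 1" by (simp_all add: holds_GDiaEq)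
  then show ?thesis using h unfolding bset_def by blast
qed

lemma count_transfer:
  fixes M :: "('p::countable, 'w) kmodel" and N :: "('p, 'v) kmodel"
  assumes al: "al \<in> {1..a}" and t: "t \<in> T"
    and kM: "card (nbh M al x) < k0 al" and kN: "card (nbh N al y) < k0 al"
    and fM: "finite (nbh M al x)" and fN: "finite (nbh N al y)"
    and SM: "\<forall>\<phi>\<in>bset Pi a k0 T M x. holds N y \<phi>"
    and SN: "\<forall>\<phi>\<in>bset Pi a k0 T N y. holds M x \<phi>"
  shows "card {u \<in> nbh M al x. holds M u t} = card {u \<in> nbh N al y. holds N u t}"
proof -
  define cM where "cM = card {u \<in> nbh M al x. holds M u t}"
  define cN where "cN = card {u \<in> nbh N al y. holds N u t}"
  have "cM \<le> card (nbh M al x)" unfolding cM_def by (rule card_mono[OF fM]) blast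
  then have cMk: "cM < k0 al" using kM by linarith
  have "cN \<le> card (nbh N al y)" unfolding cN_def by (rule card_mono[OF fN]) blast
  then have cNk: "cN < k0 al" using kN by linarith
  show ?thesis
  proof (cases "1 \<le> cM")
    case True
    have "GDiaEq al cM t \<in> bset Pi a k0 T M x"
      by (rule bset_memI) (use al True cMk t in \<open>simp_all add: cM_def\<close>)
    then have "holds N y (GDiaEq al cM t)" using SM by blast
    then show ?thesis by (simp add: holds_GDiaEq cM_def)
  next
    case False
    show ?thesis
    proof (cases "1 \<le> cN")
      case True
      have "GDiaEq al cN t \<in> bset Pi a k0 T N y"
        by (rule bset_memI) (use al True cNk t in \<open>simp_all add: cN_def\<close>)
      then have "holds M x (GDiaEq al cN t)" using SN by blast
      then show ?thesis by (simp add: holds_GDiaEq cN_def)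
    next
      case False
      then show ?thesis using \<open>\<not> 1 \<le> cM\<close> by (simp add: cM_def[symmetric] cN_def[symmetric])
    qed
  qed
qed

lemma type_runs:
  fixes M :: "('p::countable, 'w) kmodel" and N :: "('p, 'v) kmodel"
  assumes fP: "finite Pi" and M: "is_model Pi a M" and N: "is_model Pi a N"
  shows "wide a ks M \<Longrightarrow> wide a ks N \<Longrightarrow> x \<in> Wor M \<Longrightarrow> y \<in> Wor N
    \<Longrightarrow> tau Pi a ks M x = tau Pi a ks N y
    \<Longrightarrow> \<forall>t \<le> length ks. run Pi a pi delta M t x = run Pi a pi delta N t y"
proof (induction ks arbitrary: x y)
  case Nil
  have "holds M x (tau_eps Pi N y)" using holds_tau_eps[OF fP, of M x] Nil.prems(5) by simp
  then have "{p\<in>Pi. x \<in> Val M p} = {p\<in>Pi. y \<in> Val N p}" by (rule tau_eps_props[OF fP])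
  then show ?case by simp
next
  case (Cons k0 ks)
  let ?T = "Ttypes Pi a ks"
  have fT: "finite ?T" using finite_Ttypes[OF fP] .
  have wM: "wide a ks M" and wN: "wide a ks N" using Cons.prems(1,2) by (simp_all add: wide_def)
  have kM: "\<forall>al\<in>{1..a}. \<forall>z\<in>Wor M. card (nbh M al z) < k0 al"
    using Cons.prems(1) by (simp add: wide_def)
  have kN: "\<forall>al\<in>{1..a}. \<forall>z\<in>Wor N. card (nbh N al z) < k0 al"
    using Cons.prems(2) by (simp add: wide_def)
  have x: "x \<in> Wor M" and y: "y \<in> Wor N" using Cons.prems(3,4) .
  have eq: "build Pi a k0 ?T M x = build Pi a k0 ?T N y" using Cons.prems(5) by simp
  have "holds N y (build Pi a k0 ?T M x)" unfolding eq by (rule holds_build[OF fP fT])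
  then have SM: "\<forall>\<phi>\<in>bset Pi a k0 ?T M x. holds N y \<phi>"
    unfolding build_bset by (simp add: holds_canon_conj finite_bset fT)
  have "holds M x (build Pi a k0 ?T N y)" unfolding eq[symmetric] by (rule holds_build[OF fP fT])
  then have SN: "\<forall>\<phi>\<in>bset Pi a k0 ?T N y. holds M x \<phi>"
    unfolding build_bset by (simp add: holds_canon_conj finite_bset fT)
  have "tau_eps Pi M x \<in> bset Pi a k0 ?T M x" by (simp add: bset_def)
  then have "holds N y (tau_eps Pi M x)" using SM by blast
  then have props: "{p\<in>Pi. y \<in> Val N p} = {p\<in>Pi. x \<in> Val M p}" by (rule tau_eps_props[OF fP])
  have tys: "image_mset (tau Pi a ks M) (mset_set (nbh M al x))
           = image_mset (tau Pi a ks N) (mset_set (nbh N al y))" if al: "al \<in> {1..a}" for al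
  proof (rule multiset_eqI)
    fix \<tau>
    have fM: "finite (nbh M al x)" using finite_nbh[OF M al] .
    have fN: "finite (nbh N al y)" using finite_nbh[OF N al] .
    have "card {u \<in> nbh M al x. tau Pi a ks M u = \<tau>} = card {u \<in> nbh N al y. tau Pi a ks N u = \<tau>}"
    proof (cases "\<tau> \<in> ?T")
      case True
      have e1: "{u \<in> nbh M al x. tau Pi a ks M u = \<tau>} = {u \<in> nbh M al x. holds M u \<tau>}"
      proof -
        have "tau Pi a ks M u = \<tau> \<longleftrightarrow> holds M u \<tau>" if "u \<in> nbh M al x" for u
        proof
          assume "tau Pi a ks M u = \<tau>"
          then show "holds M u \<tau>" using holds_tau[OF fP, of M u a ks] by simp
        next
          assume "holds M u \<tau>"
          moreover have "u \<in> Wor M" using that nbh_sub[OF M al] by blast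
          ultimately show "tau Pi a ks M u = \<tau>" using type_char[OF fP M wM _ True] by blast
        qed
        then show ?thesis by blast
      qed
      have e2: "{u \<in> nbh N al y. tau Pi a ks N u = \<tau>} = {u \<in> nbh N al y. holds N u \<tau>}"
      proof -
        have "tau Pi a ks N u = \<tau> \<longleftrightarrow> holds N u \<tau>" if "u \<in> nbh N al y" for u
        proof
          assume "tau Pi a ks N u = \<tau>"
          then show "holds N u \<tau>" using holds_tau[OF fP, of N u a ks] by simp
        next
          assume "holds N u \<tau>"
          moreover have "u \<in> Wor N" using that nbh_sub[OF N al] by blast
          ultimately show "tau Pi a ks N u = \<tau>" using type_char[OF fP N wN _ True] by blast
        qed
        then show ?thesis by blast
      qed
      show ?thesis unfolding e1 e2
        by (rule count_transfer[OF al True _ _ fM fN SM SN]) (use kM kN al x y in blast)+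
    next
      case False
      have A: "{u \<in> nbh M al x. tau Pi a ks M u = \<tau>} = {}"
        using tau_in_Ttypes[OF M] nbh_sub[OF M al] False by blast
      have B: "{u \<in> nbh N al y. tau Pi a ks N u = \<tau>} = {}"
        using tau_in_Ttypes[OF N] nbh_sub[OF N al] False by blast
      show ?thesis unfolding A B by simp
    qed
    then show "count (image_mset (tau Pi a ks M) (mset_set (nbh M al x))) \<tau>
             = count (image_mset (tau Pi a ks N) (mset_set (nbh N al y))) \<tau>"
      by (simp add: count_img_mset_set fM fN)
  qed
  have rms: "image_mset (run Pi a pi delta M t) (mset_set (nbh M al x))
           = image_mset (run Pi a pi delta N t) (mset_set (nbh N al y))"
    if al: "al \<in> {1..a}" and t: "t \<le> length ks" for al t
  proof (rule mset_transfer[OF finite_nbh[OF M al] finite_nbh[OF N al] tys[OF al]])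
    fix u u' assume u: "u \<in> nbh M al x" and u': "u' \<in> nbh N al y"
      and e: "tau Pi a ks M u = tau Pi a ks N u'"
    have "u \<in> Wor M" using u nbh_sub[OF M al] by blast
    moreover have "u' \<in> Wor N" using u' nbh_sub[OF N al] by blast
    ultimately have "\<forall>t \<le> length ks. run Pi a pi delta M t u = run Pi a pi delta N t u'"
      using Cons.IH[OF wM wN _ _ e] by blast
    then show "run Pi a pi delta M t u = run Pi a pi delta N t u'" using t by blast
  qed
  have "run Pi a pi delta M t x = run Pi a pi delta N t y" if "t \<le> Suc (length ks)" for t
    using that
  proof (induction t)
    case 0
    then show ?case using props by simp
  next
    case (Suc t)
    then have t: "t \<le> length ks" by simp
    have IHt: "run Pi a pi delta M t x = run Pi a pi delta N t y" using Suc.IH t by simp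
    have mp: "map (\<lambda>al. image_mset (run Pi a pi delta M t) (mset_set (nbh M al x))) [1..<Suc a]
        = map (\<lambda>al. image_mset (run Pi a pi delta N t) (mset_set (nbh N al y))) [1..<Suc a]"
    proof (rule map_cong[OF refl])
      fix al assume "al \<in> set [1..<Suc a]"
      then have "al \<in> {1..a}" by (simp only: set_upt atLeastLessThanSuc_atLeastAtMost)
      then show "image_mset (run Pi a pi delta M t) (mset_set (nbh M al x))
               = image_mset (run Pi a pi delta N t) (mset_set (nbh N al y))" by (rule rms[OF _ t])
    qed
    show ?case by (simp only: run.simps mp IHt)
  qed
  then show ?case by simp
qed

definition UP :: "'p::countable set \<Rightarrow> nat" where
  "UP S = to_nat (Inl (sorted_list_of_set (to_nat ` S)) :: nat list + (nat list list \<times> nat))"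

definition UD :: "nat multiset list \<Rightarrow> nat \<Rightarrow> nat" where
  "UD Ns q = to_nat (Inr (map sorted_list_of_multiset Ns, q) :: nat list + (nat list list \<times> nat))"

lemma UP_inj: "finite S \<Longrightarrow> finite S' \<Longrightarrow> UP S = UP S' \<Longrightarrow> S = S'"
proof -
  assume f: "finite S" "finite S'" and e: "UP S = UP S'"
  then have "sorted_list_of_set (to_nat ` S) = sorted_list_of_set (to_nat ` S')"
    by (simp add: UP_def)
  then have "set (sorted_list_of_set (to_nat ` S)) = set (sorted_list_of_set (to_nat ` S'))" by simp
  then have "to_nat ` S = to_nat ` S'" using f by simp
  then show "S = S'" by (simp add: inj_image_eq_iff)
qed

lemma inj_sl: "inj (sorted_list_of_multiset :: nat multiset \<Rightarrow> nat list)"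
  by (metis injI mset_sorted_list_of_multiset)

lemma UD_inj: "UD Ns q = UD Ns' q' \<Longrightarrow> Ns = Ns' \<and> q = q'"
  by (simp add: UD_def inj_sl)

lemma U_down:
  assumes "run Pi a UP UD M (Suc d) x = run Pi a UP UD N (Suc d) y"
  shows "run Pi a UP UD M d x = run Pi a UP UD N d y \<and>
    (\<forall>al\<in>{1..a}. image_mset (run Pi a UP UD M d) (mset_set (nbh M al x))
              = image_mset (run Pi a UP UD N d) (mset_set (nbh N al y)))"
proof -
  let ?f = "\<lambda>al. image_mset (run Pi a UP UD M d) (mset_set (nbh M al x))"
  let ?g = "\<lambda>al. image_mset (run Pi a UP UD N d) (mset_set (nbh N al y))"
  have "UD (map ?f [1..<Suc a]) (run Pi a UP UD M d x) = UD (map ?g [1..<Suc a]) (run Pi a UP UD N d y)"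
    using assms by (simp only: run.simps)
  then have e: "map ?f [1..<Suc a] = map ?g [1..<Suc a]" and q: "run Pi a UP UD M d x = run Pi a UP UD N d y"
    using UD_inj by blast+
  have "?f al = ?g al" if "al \<in> {1..a}" for al
  proof -
    have "al \<in> set [1..<Suc a]" using that by (simp only: set_upt atLeastLessThanSuc_atLeastAtMost)
    moreover have "\<forall>al\<in>set [1..<Suc a]. ?f al = ?g al" using e by (simp only: map_eq_conv)
    ultimately show ?thesis by blast
  qed
  then show ?thesis using q by blast
qed

lemma U_le: "d' \<le> d \<Longrightarrow> run Pi a UP UD M d x = run Pi a UP UD N d y \<Longrightarrow>
   run Pi a UP UD M d' x = run Pi a UP UD N d' y"
proof (induction d)
  case 0 then show ?case by simp
next
  case (Suc d)
  show ?case
  proof (cases "d' = Suc d")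
    case True then show ?thesis using Suc.prems by simp
  next
    case False
    then have "d' \<le> d" using Suc.prems by simp
    moreover have "run Pi a UP UD M d x = run Pi a UP UD N d y" using U_down[OF Suc.prems(2)] by blast
    ultimately show ?thesis using Suc.IH by blast
  qed
qed

lemma U_props: "finite Pi \<Longrightarrow> run Pi a UP UD M 0 x = run Pi a UP UD N 0 y \<Longrightarrow>
   {p\<in>Pi. x \<in> Val M p} = {p\<in>Pi. y \<in> Val N p}"
  by (rule UP_inj) simp_all

lemma U_inv:
  fixes M :: "('p::countable, 'w) kmodel" and N :: "('p, 'v) kmodel"
  assumes fP: "finite Pi" and M: "is_model Pi a M" and N: "is_model Pi a N"
  shows "good Pi a \<phi> \<Longrightarrow> gdepth \<phi> \<le> d \<Longrightarrow> x \<in> Wor M \<Longrightarrow> y \<in> Wor N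
    \<Longrightarrow> run Pi a UP UD M d x = run Pi a UP UD N d y \<Longrightarrow> holds M x \<phi> = holds N y \<phi>"
proof (induction \<phi> arbitrary: d x y)
  case (GAtom p)
  have "run Pi a UP UD M 0 x = run Pi a UP UD N 0 y" by (rule U_le[OF _ GAtom.prems(5)]) simp
  then have "{p\<in>Pi. x \<in> Val M p} = {p\<in>Pi. y \<in> Val N p}" by (rule U_props[OF fP])
  then have "(p \<in> Pi \<and> x \<in> Val M p) = (p \<in> Pi \<and> y \<in> Val N p)" by blast
  then show ?case using GAtom.prems(1) by simp
next
  case (GNeg \<phi>)
  then show ?case by simp
next
  case (GAnd \<phi>1 \<phi>2)
  have "holds M x \<phi>1 = holds N y \<phi>1"
    by (rule GAnd.IH(1)) (use GAnd.prems in simp_all)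
  moreover have "holds M x \<phi>2 = holds N y \<phi>2"
    by (rule GAnd.IH(2)) (use GAnd.prems in simp_all)
  ultimately show ?case by simp
next
  case GTop then show ?case by simp
next
  case (GDia al k \<psi>)
  have al: "al \<in> {1..a}" and g: "good Pi a \<psi>" using GDia.prems(1) by simp_all
  obtain d' where d: "d = Suc d'" and dd: "gdepth \<psi> \<le> d'" using GDia.prems(2)
    by (cases d) auto
  have ms: "image_mset (run Pi a UP UD M d') (mset_set (nbh M al x))
              = image_mset (run Pi a UP UD N d') (mset_set (nbh N al y))"
    using U_down[of Pi a M d' x N y] GDia.prems(5) al d by blast
  have "card {u \<in> nbh M al x. holds M u \<psi>} = card {u \<in> nbh N al y. holds N u \<psi>}"
  proof (rule card_transfer[OF finite_nbh[OF M al] finite_nbh[OF N al] ms])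
    fix u u' assume u: "u \<in> nbh M al x" and u': "u' \<in> nbh N al y"
      and e: "run Pi a UP UD M d' u = run Pi a UP UD N d' u'"
    have "u \<in> Wor M" using u nbh_sub[OF M al] by blast
    moreover have "u' \<in> Wor N" using u' nbh_sub[OF N al] by blast
    ultimately show "holds M u \<psi> = holds N u' \<psi>" using GDia.IH[OF g dd _ _ e] by blast
  qed
  then show ?case by simp
qed

lemma card_le_Wor: "is_model Pi a M \<Longrightarrow> al \<in> {1..a} \<Longrightarrow> card (nbh M al u) \<le> card (Wor M)"
  by (rule card_mono) (auto simp: is_model_def nbh_def)

theorem lemma2:
  fixes Pi :: "'p::countable set" and a n :: nat
    and M :: "('p, 'w) kmodel" and w :: 'w
    and N :: "('p, 'v) kmodel" and v :: 'v
  assumes "finite Pi" and "a > 0"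
    and "is_model Pi a M" and "w \<in> Wor M"
    and "is_model Pi a N" and "v \<in> Wor N"
  shows "same_full_type Pi a n M w N v \<longleftrightarrow>
    (\<forall>Q pi delta F. is_cmpa Pi a (pi, delta) Q F \<longrightarrow>
       (\<forall>t \<le> n. run Pi a pi delta M t w = run Pi a pi delta N t v))"
proof
  assume sft: "same_full_type Pi a n M w N v"
  define K where "K = Suc (card (Wor M) + card (Wor N))"
  define ks where "ks = replicate n (\<lambda>_::nat. K)"
  have bM: "card (nbh M al u) < K" if "al \<in> {1..a}" for al u
    using card_le_Wor[OF assms(3) that, of u] unfolding K_def by linarith
  have bN: "card (nbh N al u) < K" if "al \<in> {1..a}" for al u
    using card_le_Wor[OF assms(5) that, of u] unfolding K_def by linarith
  have wM: "wide a ks M" using bM by (simp add: wide_def ks_def)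
  have wN: "wide a ks N" using bN by (simp add: wide_def ks_def)
  have aM: "admissible a ks M w" using bM by (simp add: admissible_def ks_def)
  have aN: "admissible a ks N v" using bN by (simp add: admissible_def ks_def)
  have len: "length ks = n" by (simp add: ks_def)
  have "tau Pi a ks M w = tau Pi a ks N v"
    using sft aM aN len unfolding same_full_type_def by blast
  then have "\<forall>t \<le> length ks. run Pi a pi delta M t w = run Pi a pi delta N t v" for pi delta
    using type_runs[OF assms(1,3,5) wM wN assms(4,6)] by blast
  then show "\<forall>Q pi delta F. is_cmpa Pi a (pi, delta) Q F \<longrightarrow>
       (\<forall>t \<le> n. run Pi a pi delta M t w = run Pi a pi delta N t v)" using len by blast
next
  assume H: "\<forall>Q pi delta F. is_cmpa Pi a (pi, delta) Q F \<longrightarrow>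
       (\<forall>t \<le> n. run Pi a pi delta M t w = run Pi a pi delta N t v)"
  have "is_cmpa Pi a (UP, UD) UNIV {}" by (simp add: is_cmpa_def)
  then have Un: "run Pi a UP UD M n w = run Pi a UP UD N n v" using H by blast
  have U0: "run Pi a UP UD M 0 w = run Pi a UP UD N 0 v" using U_le[OF _ Un] by blast
  have "{p\<in>Pi. w \<in> Val M p} = {p\<in>Pi. v \<in> Val N p}" by (rule U_props[OF assms(1) U0])
  then have teps: "tau_eps Pi M w = tau_eps Pi N v" by (rule tau_eps_cong)
  show "same_full_type Pi a n M w N v"
    unfolding same_full_type_def
  proof (intro allI impI)
    fix ks :: "(nat \<Rightarrow> nat) list"
    assume "length ks = n \<and> admissible a ks M w \<and> admissible a ks N v"
    then have len: "length ks = n" by blast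
    show "tau Pi a ks M w = tau Pi a ks N v"
    proof (cases ks)
      case Nil
      then show ?thesis using teps by simp
    next
      case (Cons k0 ks')
      let ?T = "Ttypes Pi a ks'"
      have n: "n = Suc (length ks')" using len Cons by simp
      have gT: "good Pi a t \<and> gdepth t \<le> length ks'" if "t \<in> ?T" for t
        using good_Ttypes that by blast
      have ms: "\<forall>al\<in>{1..a}. image_mset (run Pi a UP UD M (length ks')) (mset_set (nbh M al w))
              = image_mset (run Pi a UP UD N (length ks')) (mset_set (nbh N al v))"
        using U_down[of Pi a M "length ks'" w N v] Un n by blast
      have inv: "holds M w \<phi> = holds N v \<phi>" if "good Pi a \<phi>" "gdepth \<phi> \<le> n" for \<phi>
        by (rule U_inv[OF assms(1,3,5) that assms(4,6) Un])
      have "build Pi a k0 ?T M w = build Pi a k0 ?T N v"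
      proof (rule build_cong)
        show "tau_eps Pi M w = tau_eps Pi N v" by (rule teps)
        show "\<forall>al\<in>{1..a}. card (nbh M al w) = card (nbh N al v)"
        proof
          fix al assume al: "al \<in> {1..a}"
          have "size (image_mset (run Pi a UP UD M (length ks')) (mset_set (nbh M al w)))
              = size (image_mset (run Pi a UP UD N (length ks')) (mset_set (nbh N al v)))"
            using ms al by simp
          then show "card (nbh M al w) = card (nbh N al v)" by simp
        qed
        show "\<forall>al\<in>{1..a}. \<forall>t\<in>?T. \<forall>l. 1 \<le> l \<and> l \<le> k0 al - 1 \<longrightarrow>
            (holds M w (GDiaEq al l t) \<longleftrightarrow> holds N v (GDiaEq al l t))"
        proof (intro ballI allI impI)
          fix al t l assume "al \<in> {1..a}" "t \<in> ?T"
          then show "holds M w (GDiaEq al l t) \<longleftrightarrow> holds N v (GDiaEq al l t)"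
            using gT[of t] n by (intro inv) (simp_all add: GDiaEq_def)
        qed
        show "\<forall>al\<in>{1..a}. \<forall>t\<in>?T. holds M w (GDia al (k0 al) t) \<longleftrightarrow> holds N v (GDia al (k0 al) t)"
        proof (intro ballI)
          fix al t assume "al \<in> {1..a}" "t \<in> ?T"
          then show "holds M w (GDia al (k0 al) t) \<longleftrightarrow> holds N v (GDia al (k0 al) t)"
            using gT[of t] n by (intro inv) simp_all
        qed
      qed
      then show ?thesis using Cons by simp
    qed
  qed
qed

end
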